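(* Let $G=(V,E)$ be a finite, undirected, unweighted, 2-vertex-connected graph with $n=|V|$ vertices, and let $\gamma<3$ be a real number. Suppose $T$ is a minimum spanning tree of $G$ and $C_T$ is a cycle (closed walk) in $G$, not necessarily simple, whose vertex set contains every vertex of odd degree in $T$, and such that $\ell(C_T)\le(1+\gamma)|C_T|$. Then $G$ has a TSP tour of length at most $\frac{4n}{3-\gamma}$.
   Context: For a (not necessarily simple) cycle $C$, i.e. a closed walk in $G$ that may repeat vertices, $|C|$ denotes the number of distinct vertices of $C$ and $\ell(C)$ denotes the length of a traversal of $C$, i.e. the number of edges traversed counted with multiplicity. A TSP tour of $G$ is a closed walk in $G$ visiting every vertex at least once, with length the number of edges traversed counted with multiplicity. Since $G$ is unweighted, every spanning tree is a minimum spanning tree. *)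

theory Defs
  imports Complex_Main
begin

definition graph :: "'a set \<Rightarrow> 'a set set \<Rightarrow> bool" where
  "graph V E \<longleftrightarrow> finite V \<and> (\<forall>e\<in>E. e \<subseteq> V \<and> card e = 2)"

definition walk :: "'a set \<Rightarrow> 'a set set \<Rightarrow> 'a list \<Rightarrow> bool" where
  "walk V E xs \<longleftrightarrow> xs \<noteq> [] \<and> set xs \<subseteq> V \<and>
     (\<forall>i < length xs - 1. {xs ! i, xs ! Suc i} \<in> E)"

definition walk_length :: "'a list \<Rightarrow> nat" where
  "walk_length xs = length xs - 1"

definition closed_walk :: "'a set \<Rightarrow> 'a set set \<Rightarrow> 'a list \<Rightarrow> bool" where
  "closed_walk V E xs \<longleftrightarrow> walk V E xs \<and> hd xs = last xs"

definition connected_graph :: "'a set \<Rightarrow> 'a set set \<Rightarrow> bool" where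
  "connected_graph V E \<longleftrightarrow>
     (\<forall>u\<in>V. \<forall>v\<in>V. \<exists>xs. walk V E xs \<and> hd xs = u \<and> last xs = v)"

definition two_vertex_connected :: "'a set \<Rightarrow> 'a set set \<Rightarrow> bool" where
  "two_vertex_connected V E \<longleftrightarrow> card V \<ge> 3 \<and> connected_graph V E \<and>
     (\<forall>v\<in>V. connected_graph (V - {v}) {e\<in>E. v \<notin> e})"

definition acyclic_edges :: "'a set \<Rightarrow> 'a set set \<Rightarrow> bool" where
  "acyclic_edges V T \<longleftrightarrow>
     (\<forall>e\<in>T. \<forall>u v. e = {u, v} \<longrightarrow>
        \<not> (\<exists>xs. walk V (T - {e}) xs \<and> hd xs = u \<and> last xs = v))"

definition spanning_tree :: "'a set \<Rightarrow> 'a set set \<Rightarrow> 'a set set \<Rightarrow> bool" where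
  "spanning_tree V E T \<longleftrightarrow> T \<subseteq> E \<and> connected_graph V T \<and> acyclic_edges V T"

text \<open>Unweighted graph: every spanning tree is a minimum spanning tree.\<close>
definition minimum_spanning_tree :: "'a set \<Rightarrow> 'a set set \<Rightarrow> 'a set set \<Rightarrow> bool" where
  "minimum_spanning_tree V E T \<longleftrightarrow> spanning_tree V E T \<and>
     (\<forall>T'. spanning_tree V E T' \<longrightarrow> card T \<le> card T')"

definition degree :: "'a set set \<Rightarrow> 'a \<Rightarrow> nat" where
  "degree T v = card {e\<in>T. v \<in> e}"

definition tsp_tour :: "'a set \<Rightarrow> 'a set set \<Rightarrow> 'a list \<Rightarrow> bool" where
  "tsp_tour V E xs \<longleftrightarrow> closed_walk V E xs \<and> V \<subseteq> set xs"

end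

theory Submission
  imports Defs "HOL-Library.Multiset"
begin


fun wedges :: "'a list \<Rightarrow> 'a set set" where
  "wedges (x # y # xs) = insert {x, y} (wedges (y # xs))"
| "wedges _ = {}"

lemma all_edges_iff: "(\<forall>i < length xs - 1. {xs ! i, xs ! Suc i} \<in> E) \<longleftrightarrow> wedges xs \<subseteq> E"
proof (induction xs rule: wedges.induct)
  case (1 x y xs)
  have "(\<forall>i < length (x # y # xs) - 1. {(x # y # xs) ! i, (x # y # xs) ! Suc i} \<in> E)
     \<longleftrightarrow> {x,y} \<in> E \<and> (\<forall>i < length (y # xs) - 1. {(y # xs) ! i, (y # xs) ! Suc i} \<in> E)"
    by (auto simp: All_less_Suc2)
  then show ?case using 1 by simp
qed auto

lemma walk_iff: "walk V E xs \<longleftrightarrow> xs \<noteq> [] \<and> set xs \<subseteq> V \<and> wedges xs \<subseteq> E"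
  unfolding walk_def all_edges_iff by simp

lemma wedges_Cons: "wedges (x # xs) = (if xs = [] then {} else insert {x, hd xs} (wedges xs))"
  by (cases xs) auto

lemma wedges_append: "wedges (xs @ ys) = wedges xs \<union> wedges ys \<union>
   (if xs \<noteq> [] \<and> ys \<noteq> [] then {{last xs, hd ys}} else {})"
  by (induction xs) (auto simp: wedges_Cons)

lemma wedges_rev: "wedges (rev xs) = wedges xs"
proof (induction xs)
  case (Cons x xs)
  show ?case
  proof (cases "xs = []")
    case False
    have "{last (rev xs), x} = {x, hd xs}" using False by (simp add: last_rev insert_commute)
    then show ?thesis using Cons False by (simp add: wedges_append wedges_Cons)
  qed simp
qed simp

lemma wedges_sub: "e \<in> wedges xs \<Longrightarrow> e \<subseteq> set xs"
  by (induction xs rule: wedges.induct) auto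

lemma glue:
  assumes "walk V E xs" "walk V E ys" "last xs = hd ys"
  shows "walk V E (xs @ tl ys)" "set (xs @ tl ys) = set xs \<union> set ys"
    "wedges (xs @ tl ys) = wedges xs \<union> wedges ys"
    "walk_length (xs @ tl ys) = walk_length xs + walk_length ys"
    "hd (xs @ tl ys) = hd xs" "last (xs @ tl ys) = last ys"
proof -
  obtain y ys' where ys: "ys = y # ys'" using assms(2) by (cases ys) (auto simp: walk_def)
  have xs: "xs \<noteq> []" using assms(1) by (auto simp: walk_def)
  have we: "wedges ys = (if ys' = [] then {} else {{y, hd ys'}}) \<union> wedges ys'"
    using ys by (auto simp: wedges_Cons)
  show "wedges (xs @ tl ys) = wedges xs \<union> wedges ys"
    using assms(3) ys xs by (auto simp: wedges_append wedges_Cons)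
  then show "walk V E (xs @ tl ys)" using assms xs ys by (auto simp: walk_iff)
  show "set (xs @ tl ys) = set xs \<union> set ys" using ys xs assms(3)
    by auto
  show "walk_length (xs @ tl ys) = walk_length xs + walk_length ys"
    using ys xs by (cases xs) (auto simp: walk_length_def)
  show "hd (xs @ tl ys) = hd xs" using xs by simp
  show "last (xs @ tl ys) = last ys" using xs ys assms(3) by (cases ys') auto
qed

lemma walk_rev: "walk V E xs \<Longrightarrow> walk V E (rev xs)"
  by (auto simp: walk_iff wedges_rev)

lemma walk_mono: "walk V E xs \<Longrightarrow> E \<subseteq> F \<Longrightarrow> walk V F xs"
  by (auto simp: walk_iff)

lemma cut:
  assumes "walk V E xs" "hd xs \<in> S" "last xs \<notin> S"
  shows "\<exists>u w. {u, w} \<in> wedges xs \<and> u \<in> S \<and> w \<notin> S"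
  using assms
proof (induction xs rule: wedges.induct)
  case (1 x y xs)
  show ?case
  proof (cases "y \<in> S")
    case True
    have "walk V E (y # xs)" using 1(2) by (auto simp: walk_iff)
    with 1 True show ?thesis by auto
  next
    case False then show ?thesis using 1 by auto
  qed
qed (auto simp: walk_def)

lemma walk_single: "v \<in> V \<Longrightarrow> walk V E [v]"
  by (auto simp: walk_iff)




lemma walk_prefix: "walk V E (xs @ ys) \<Longrightarrow> xs \<noteq> [] \<Longrightarrow> walk V E xs"
  by (auto simp: walk_iff wedges_append)

lemma walk_suffix: "walk V E (xs @ ys) \<Longrightarrow> ys \<noteq> [] \<Longrightarrow> walk V E ys"
  by (auto simp: walk_iff wedges_append)

lemma rotate:
  assumes "closed_walk V E P" "a \<in> set P"
  shows "\<exists>P'. closed_walk V E P' \<and> hd P' = a \<and> set P' = set P \<and> wedges P' = wedges P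
     \<and> walk_length P' = walk_length P"
proof -
  obtain xs ys where P: "P = xs @ a # ys" using assms(2) by (meson split_list)
  show ?thesis
  proof (cases "xs = []")
    case True then show ?thesis using assms P by auto
  next
    case False
    have w: "walk V E P" "hd P = last P" using assms(1) by (auto simp: closed_walk_def)
    have w1: "walk V E (a # ys)" using w P walk_suffix by blast
    have w2: "walk V E (xs @ [a])" using w P walk_prefix[of V E "xs @ [a]" ys] by auto
    have l: "last (a # ys) = hd (xs @ [a])" using w P False by (cases xs) auto
    note g = glue[OF w1 w2 l]
    have e: "wedges (a # ys) \<union> wedges (xs @ [a]) = wedges P"
      using P False by (auto simp: wedges_append)
    show ?thesis
      apply (rule exI[of _ "(a # ys) @ tl (xs @ [a])"])
      using g e P False by (auto simp: closed_walk_def walk_length_def)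
  qed
qed

definition cnt :: "'a list multiset \<Rightarrow> 'a \<Rightarrow> nat" where
  "cnt M v = (\<Sum>w\<in>#M. of_bool (hd w = v) + of_bool (last w = v))"

lemma cnt_add: "cnt (add_mset w M) v = of_bool (hd w = v) + of_bool (last w = v) + cnt M v"
  by (simp add: cnt_def)

lemma cnt_zero: "\<forall>w\<in>#M. hd w \<noteq> v \<and> last w \<noteq> v \<Longrightarrow> cnt M v = 0"
  unfolding cnt_def by (induction M) auto

lemma euler:
  assumes "\<forall>w\<in>#M. walk V E w" "\<forall>v. even (cnt M v)"
    "connected_graph V (\<Union>w\<in>set_mset M. wedges w)" "M \<noteq> {#}"
  shows "\<exists>W. closed_walk V E W \<and> set W = (\<Union>w\<in>set_mset M. set w)
     \<and> walk_length W = (\<Sum>w\<in>#M. walk_length w)"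
  using assms
proof (induction "size M" arbitrary: M rule: less_induct)
  case less
  show ?case
  proof (cases "size M = 1")
    case True
    then obtain w where M: "M = {#w#}" by (metis size_1_singleton_mset)
    have "even (cnt M (hd w))" using less by auto
    then have "hd w = last w" using M by (auto simp: cnt_def split: if_splits)
    then show ?thesis using M less by (auto simp: closed_walk_def)
  next
    case False
    then have sz: "size M \<ge> 2" using less(5) by (cases "size M") auto
    show ?thesis
    proof (cases "\<exists>P\<in>#M. hd P \<noteq> last P")
      case True
      then obtain P where P: "P \<in># M" "hd P \<noteq> last P" by auto
      define M1 where "M1 = M - {#P#}"
      have M: "M = add_mset P M1" using P by (simp add: M1_def)
      define a where "a = last P"
      have "even (cnt M a)" using less by auto
      then have "odd (cnt M1 a)" using P by (simp add: M cnt_add a_def)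
      then obtain Q where Q: "Q \<in># M1" "hd Q = a \<or> last Q = a"
        using cnt_zero[of M1 a] by fastforce
      define Q' where "Q' = (if hd Q = a then Q else rev Q)"
      have wQ: "walk V E Q" using less(2) Q M by auto
      have wQ': "walk V E Q'" using wQ walk_rev Q'_def by auto
      have wP: "walk V E P" using less(2) P by auto
      have hQ': "hd Q' = a" using Q wQ by (auto simp: Q'_def walk_def hd_rev)
      have Q'props: "set Q' = set Q" "wedges Q' = wedges Q" "walk_length Q' = walk_length Q"
        "of_bool (hd Q' = v) + of_bool (last Q' = v) = (of_bool (hd Q = v) + of_bool (last Q = v) :: nat)" for v
        using wQ by (auto simp: Q'_def wedges_rev walk_length_def walk_def hd_rev last_rev)
      have l: "last P = hd Q'" using hQ' a_def by simp
      note g = glue[OF wP wQ' l]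
      define R where "R = P @ tl Q'"
      define M2 where "M2 = add_mset R (M1 - {#Q#})"
      have M1: "M1 = add_mset Q (M1 - {#Q#})" using Q by simp
      have szM1: "size M1 > 0" using Q by (metis empty_iff set_mset_empty size_eq_0_iff_empty neq0_conv)
      have szM2: "size M2 < size M" using Q szM1 by (simp add: M2_def M size_Diff_singleton)
      have cntM: "cnt M v = cnt M2 v + 2 * of_bool (v = a)" for v
      proof -
        have "cnt M v = of_bool (hd P = v) + of_bool (last P = v) + (of_bool (hd Q' = v) + of_bool (last Q' = v)) + cnt (M1 - {#Q#}) v"
          using Q'props(4)[of v] by (subst M, subst M1) (simp add: cnt_add)
        also have "\<dots> = cnt M2 v + 2 * of_bool (v = a)"
          using g hQ' by (auto simp: M2_def cnt_add R_def a_def)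
        finally show ?thesis .
      qed
      have ev: "\<forall>v. even (cnt M2 v)"
      proof
        fix v show "even (cnt M2 v)" using less(3) cntM[of v] by (metis even_add even_mult_iff even_numeral)
      qed
      have wM2: "\<forall>w\<in>#M2. walk V E w" using less(2) g M M1 unfolding M2_def R_def
        by (metis in_diffD insert_iff set_mset_add_mset_insert union_single_eq_member)
      have unE: "(\<Union>w\<in>set_mset M2. wedges w) = (\<Union>w\<in>set_mset M. wedges w)"
        using g Q'props M M1 unfolding M2_def R_def
        by (smt (verit, ccfv_threshold) SUP_insert Un_assoc set_mset_add_mset_insert)
      have unS: "(\<Union>w\<in>set_mset M2. set w) = (\<Union>w\<in>set_mset M. set w)"
        using g Q'props M M1 unfolding M2_def R_def
        by (smt (verit, ccfv_threshold) SUP_insert Un_assoc set_mset_add_mset_insert)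
      have unL: "(\<Sum>w\<in>#M2. walk_length w) = (\<Sum>w\<in>#M. walk_length w)"
      proof -
        have "(\<Sum>w\<in>#M. walk_length w) = walk_length P + walk_length Q + (\<Sum>w\<in>#(M1 - {#Q#}). walk_length w)"
          by (subst M, subst M1) simp
        then show ?thesis using g Q'props by (simp add: M2_def R_def)
      qed
      have "M2 \<noteq> {#}" by (simp add: M2_def)
      from less(1)[OF szM2 wM2 ev _ this] unE unS unL less(4) show ?thesis by simp
    next
      case False
      then have closedM: "\<forall>P\<in>#M. closed_walk V E P" using less(2) by (auto simp: closed_walk_def)
      obtain P where P: "P \<in># M" using less(5) by auto
      define M1 where "M1 = M - {#P#}"
      have M: "M = add_mset P M1" using P by (simp add: M1_def)
      have "M1 \<noteq> {#}" using sz M by auto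
      have "\<exists>Q\<in>#M1. set Q \<inter> set P \<noteq> {}"
      proof (rule ccontr)
        assume nq: "\<not> ?thesis"
        obtain Q where Q: "Q \<in># M1" using \<open>M1 \<noteq> {#}\<close> by auto
        have wQ: "walk V E Q" "walk V E P" using less(2) Q M by auto
        have x: "hd Q \<in> V" "hd Q \<notin> set P" using wQ nq Q by (auto simp: walk_def dest!: hd_in_set)
        have y: "hd P \<in> V" "hd P \<in> set P" using wQ by (auto simp: walk_def)
        obtain xs where xs: "walk V (\<Union>w\<in>set_mset M. wedges w) xs" "hd xs = hd P" "last xs = hd Q"
          using less(4) x y unfolding connected_graph_def by blast
        obtain u w where uw: "{u, w} \<in> wedges xs" "u \<in> set P" "w \<notin> set P"
          using cut[OF xs(1), of "set P"] xs y x by auto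
        then obtain W where W: "W \<in># M" "{u, w} \<in> wedges W" using xs(1) by (auto simp: walk_iff)
        have sub: "{u, w} \<subseteq> set W" using wedges_sub W by blast
        show False
        proof (cases "W = P")
          case True then show False using sub uw by auto
        next
          case False
          then have "W \<in># M1" using W M by auto
          then show False using nq sub uw by auto
        qed
      qed
      then obtain Q a where Q: "Q \<in># M1" "a \<in> set Q" "a \<in> set P" by auto
      have cP: "closed_walk V E P" "closed_walk V E Q" using closedM P Q M by auto
      obtain P' where P': "closed_walk V E P'" "hd P' = a" "set P' = set P" "wedges P' = wedges P"
        "walk_length P' = walk_length P" using rotate[OF cP(1) Q(3)] by blast
      obtain Q' where Q': "closed_walk V E Q'" "hd Q' = a" "set Q' = set Q" "wedges Q' = wedges Q"
        "walk_length Q' = walk_length Q" using rotate[OF cP(2) Q(2)] by blast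
      have wP': "walk V E P'" "last P' = a" using P' by (auto simp: closed_walk_def)
      have wQ': "walk V E Q'" "last Q' = a" using Q' by (auto simp: closed_walk_def)
      have l: "last P' = hd Q'" using wP' Q' by simp
      note g = glue[OF wP'(1) wQ'(1) l]
      define R where "R = P' @ tl Q'"
      define M2 where "M2 = add_mset R (M1 - {#Q#})"
      have M1: "M1 = add_mset Q (M1 - {#Q#})" using Q by simp
      have szM1: "size M1 > 0" using Q by (metis empty_iff set_mset_empty size_eq_0_iff_empty neq0_conv)
      have szM2: "size M2 < size M" using Q szM1 by (simp add: M2_def M size_Diff_singleton)
      have hl: "hd P = last P" "hd Q = last Q" using cP by (auto simp: closed_walk_def)
      have cntM: "cnt M v + 2 * of_bool (v = a) = cnt M2 v + 2 * of_bool (v = hd P) + 2 * of_bool (v = hd Q)" for v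
      proof -
        have "cnt M v = of_bool (hd P = v) + of_bool (last P = v) + (of_bool (hd Q = v) + of_bool (last Q = v)) + cnt (M1 - {#Q#}) v"
          by (subst M, subst M1) (simp add: cnt_add)
        moreover have "cnt M2 v = 2 * of_bool (v = a) + cnt (M1 - {#Q#}) v"
          using g wQ' P' by (auto simp: M2_def cnt_add R_def)
        ultimately show ?thesis using hl by auto
      qed
      have ev: "\<forall>v. even (cnt M2 v)"
      proof
        fix v show "even (cnt M2 v)" using less(3) cntM[of v]
          by (metis dvd_add_left_iff even_mult_iff even_numeral)
      qed
      have wM2: "\<forall>w\<in>#M2. walk V E w" using less(2) g M M1 unfolding M2_def R_def
        by (metis in_diffD insert_iff set_mset_add_mset_insert union_single_eq_member)
      have unE: "(\<Union>w\<in>set_mset M2. wedges w) = (\<Union>w\<in>set_mset M. wedges w)"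
        using g P' Q' M M1 unfolding M2_def R_def
        by (smt (verit, ccfv_threshold) SUP_insert Un_assoc set_mset_add_mset_insert)
      have unS: "(\<Union>w\<in>set_mset M2. set w) = (\<Union>w\<in>set_mset M. set w)"
        using g P' Q' M M1 unfolding M2_def R_def
        by (smt (verit, ccfv_threshold) SUP_insert Un_assoc set_mset_add_mset_insert)
      have unL: "(\<Sum>w\<in>#M2. walk_length w) = (\<Sum>w\<in>#M. walk_length w)"
      proof -
        have "(\<Sum>w\<in>#M. walk_length w) = walk_length P + walk_length Q + (\<Sum>w\<in>#(M1 - {#Q#}). walk_length w)"
          by (subst M, subst M1) simp
        then show ?thesis using g P' Q' by (simp add: M2_def R_def)
      qed
      have "M2 \<noteq> {#}" by (simp add: M2_def)
      from less(1)[OF szM2 wM2 ev _ this] unE unS unL less(4) show ?thesis by simp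
    qed
  qed
qed




lemma extend:
  assumes "closed_walk V E W" "connected_graph V E" "finite V"
  shows "\<exists>W'. closed_walk V E W' \<and> V \<subseteq> set W' \<and> walk_length W' \<le> walk_length W + 2 * card (V - set W)"
  using assms
proof (induction "card (V - set W)" arbitrary: W rule: less_induct)
  case less
  show ?case
  proof (cases "V \<subseteq> set W")
    case True then show ?thesis using less by auto
  next
    case False
    then obtain x where x: "x \<in> V" "x \<notin> set W" by auto
    have wW: "walk V E W" "hd W = last W" using less(2) by (auto simp: closed_walk_def)
    have hW: "hd W \<in> V" "hd W \<in> set W" using wW by (auto simp: walk_def)
    obtain xs where xs: "walk V E xs" "hd xs = hd W" "last xs = x"
      using less(3) x hW unfolding connected_graph_def by blast
    obtain u w where uw: "{u, w} \<in> wedges xs" "u \<in> set W" "w \<notin> set W"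
      using cut[OF xs(1), of "set W"] xs hW x by auto
    have uwE: "{u, w} \<in> E" "w \<in> V" using uw xs(1) wedges_sub[OF uw(1)] by (auto simp: walk_iff)
    obtain ys zs where W: "W = ys @ u # zs" using uw(2) by (meson split_list)
    define W2 where "W2 = ys @ u # w # u # zs"
    have wu: "{w, u} = {u, w}" by auto
    have "wedges W2 = wedges W \<union> {{u, w}}"
      using W by (auto simp: W2_def wedges_append wedges_Cons wu)
    then have w2: "walk V E W2" using wW uwE W by (auto simp: walk_iff W2_def)
    have c2: "closed_walk V E W2" using w2 wW W
      by (cases ys; cases zs) (auto simp: closed_walk_def W2_def)
    have s2: "set W2 = insert w (set W)" using W by (auto simp: W2_def)
    have l2: "walk_length W2 = walk_length W + 2" using W by (simp add: W2_def walk_length_def)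
    have cd: "card (V - set W) = Suc (card (V - set W2))"
    proof -
      have "V - set W = insert w (V - set W2)" "w \<notin> V - set W2" using s2 uw uwE by auto
      then show ?thesis using less(4) by simp
    qed
    obtain W' where "closed_walk V E W'" "V \<subseteq> set W'" "walk_length W' \<le> walk_length W2 + 2 * card (V - set W2)"
      using less(1)[of W2] cd c2 less(3,4) by auto
    then show ?thesis using cd l2 by (intro exI[of _ W']) auto
  qed
qed

lemma tree_card:
  assumes "graph V E" "connected_graph V E" "minimum_spanning_tree V E T" "r \<in> V"
  shows "card T \<le> card V - 1"
proof -
  have fin: "finite V" using assms(1) by (simp add: graph_def)
  define dd where "dd v = (LEAST k. \<exists>xs. walk V E xs \<and> hd xs = r \<and> last xs = v \<and> walk_length xs = k)" for v
  have dist_ex: "\<exists>xs. walk V E xs \<and> hd xs = r \<and> last xs = v \<and> walk_length xs = dd v" if vV: "v \<in> V" for v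
  proof -
    obtain xs where xs: "walk V E xs" "hd xs = r" "last xs = v"
      using assms(2) assms(4) vV unfolding connected_graph_def by meson
    have "\<exists>k. \<exists>xs. walk V E xs \<and> hd xs = r \<and> last xs = v \<and> walk_length xs = k"
      using xs by (intro exI[of _ "walk_length xs"] exI[of _ xs]) simp
    from LeastI_ex[OF this] show ?thesis unfolding dd_def .
  qed
  have dist_le: "dd (last xs) \<le> walk_length xs" if "walk V E xs" "hd xs = r" for xs
  proof -
    have "\<exists>ys. walk V E ys \<and> hd ys = r \<and> last ys = last xs \<and> walk_length ys = walk_length xs"
      using that by (intro exI[of _ xs]) simp
    then show ?thesis unfolding dd_def by (rule Least_le)
  qed
  have par_ex: "\<exists>u. u \<in> V \<and> {u, v} \<in> E \<and> dd u < dd v" if vr: "v \<in> V" "v \<noteq> r" for v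
  proof -
    obtain xs where xs: "walk V E xs" "hd xs = r" "last xs = v" "walk_length xs = dd v" using dist_ex vr by blast
    have ne: "xs \<noteq> []" using xs by (auto simp: walk_def)
    define ys where "ys = butlast xs"
    have xsys: "xs = ys @ [v]" using ne xs(3) unfolding ys_def by (metis append_butlast_last_id)
    have ysne: "ys \<noteq> []" using xsys xs(2,3) vr(2) by auto
    have wys: "walk V E ys" using walk_prefix xs(1) xsys ysne by metis
    have hys: "hd ys = r" using xs(2) xsys ysne by simp
    have "{last ys, v} \<in> E" using xs(1) xsys ysne by (auto simp: walk_iff wedges_append)
    moreover have "dd (last ys) < dd v"
      using dist_le[OF wys hys] xs(4) xsys ysne by (cases ys) (auto simp: walk_length_def)
    moreover have "last ys \<in> V" using wys ysne by (auto simp: walk_def)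
    ultimately show ?thesis by blast
  qed
  define par where "par v = (if v = r then r else SOME u. u \<in> V \<and> {u, v} \<in> E \<and> dd u < dd v)" for v
  have par: "par v \<in> V \<and> {par v, v} \<in> E \<and> dd (par v) < dd v" if "v \<in> V" "v \<noteq> r" for v
    using someI_ex[OF par_ex[OF that]] that by (simp add: par_def)
  have parV: "par v \<in> V" "dd (par v) \<le> dd v" if "v \<in> V" for v
  proof -
    have "par r = r" by (simp add: par_def)
    then show "par v \<in> V" "dd (par v) \<le> dd v" using par[of v] that assms(4) by (cases "v = r"; auto)+
  qed
  define T0 where "T0 = (\<lambda>v. {v, par v}) ` (V - {r})"
  have cT0: "card T0 \<le> card V - 1"
    unfolding T0_def using card_image_le[of "V - {r}" "\<lambda>v. {v, par v}"] fin assms(4) by simp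
  have T0E: "T0 \<subseteq> E"
  proof
    fix e assume "e \<in> T0"
    then obtain v where v: "v \<in> V" "v \<noteq> r" "e = {v, par v}" unfolding T0_def by auto
    have "{v, par v} = {par v, v}" by blast
    then show "e \<in> E" using par[OF v(1,2)] v(3) by simp
  qed
  have reach: "\<exists>xs. walk V T0 xs \<and> hd xs = r \<and> last xs = v" if "v \<in> V" for v
    using that
  proof (induction "dd v" arbitrary: v rule: less_induct)
    case less
    show ?case
    proof (cases "v = r")
      case True then show ?thesis using less walk_single[of v V T0] by auto
    next
      case False
      note p = par[OF less(2) False]
      obtain xs where xs: "walk V T0 xs" "hd xs = r" "last xs = par v" using less(1)[of "par v"] p by auto
      have "{par v, v} = {v, par v}" by blast
      then have e: "{par v, v} \<in> T0" unfolding T0_def using less(2) False by auto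
      have w1: "walk V T0 [par v, v]" using p less(2) e by (auto simp: walk_iff)
      note g = glue[OF xs(1) w1] 
      show ?thesis using g xs by (intro exI[of _ "xs @ tl [par v, v]"]) auto
    qed
  qed
  have conn: "connected_graph V T0" unfolding connected_graph_def
  proof (intro ballI)
    fix u v assume uv: "u \<in> V" "v \<in> V"
    obtain xs where xs: "walk V T0 xs" "hd xs = r" "last xs = u" using reach uv by blast
    obtain ys where ys: "walk V T0 ys" "hd ys = r" "last ys = v" using reach uv by blast
    have ne: "xs \<noteq> []" using xs by (auto simp: walk_def)
    have l: "last (rev xs) = hd ys" using xs ys ne by (simp add: last_rev)
    note g = glue[OF walk_rev[OF xs(1)] ys(1) l]
    show "\<exists>xs. walk V T0 xs \<and> hd xs = u \<and> last xs = v"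
      using g xs ys ne by (intro exI[of _ "rev xs @ tl ys"]) (auto simp: hd_rev)
  qed
  have chain: "(par ^^ k) y \<in> V \<and> dd ((par ^^ k) y) \<le> dd y" if "y \<in> V" for y k
    using that by (induction k) (auto intro: order_trans dest: parV)
  have acyc: "acyclic_edges V T0" unfolding acyclic_edges_def
  proof (intro ballI allI impI notI)
    fix e u v assume e: "e \<in> T0" "e = {u, v}"
      and ex: "\<exists>xs. walk V (T0 - {e}) xs \<and> hd xs = u \<and> last xs = v"
    obtain z where z: "z \<in> V" "z \<noteq> r" "e = {z, par z}" using e unfolding T0_def by auto
    note pz = par[OF z(1,2)]
    have "\<exists>xs. walk V (T0 - {e}) xs \<and> hd xs = z \<and> last xs = par z"
    proof -
      obtain xs where xs: "walk V (T0 - {e}) xs" "hd xs = u" "last xs = v" using ex by blast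
      have ne: "xs \<noteq> []" using xs by (auto simp: walk_def)
      have "(u = z \<and> v = par z) \<or> (u = par z \<and> v = z)" using e z by (auto simp: doubleton_eq_iff)
      then show ?thesis
      proof
        assume "u = z \<and> v = par z" then show ?thesis using xs by blast
      next
        assume "u = par z \<and> v = z" then show ?thesis using xs ne walk_rev[OF xs(1)]
          by (intro exI[of _ "rev xs"]) (auto simp: hd_rev last_rev)
      qed
    qed
    then obtain xs where xs: "walk V (T0 - {e}) xs" "hd xs = z" "last xs = par z" by blast
    define D where "D = {w. \<exists>k. (par ^^ k) w = z}"
    have zD: "z \<in> D" unfolding D_def by (auto intro: exI[of _ 0])
    have pzD: "par z \<notin> D"
    proof
      assume "par z \<in> D"
      then obtain k where "(par ^^ k) (par z) = z" unfolding D_def by auto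
      then show False using chain[of "par z" k] pz by auto
    qed
    have claim: "z' \<in> D \<longleftrightarrow> par z' \<in> D" if "{z', par z'} \<noteq> e" for z'
    proof
      assume "z' \<in> D"
      then obtain k where k: "(par ^^ k) z' = z" unfolding D_def by auto
      show "par z' \<in> D"
      proof (cases k)
        case 0 then show ?thesis using k that z by auto
      next
        case (Suc k') then show ?thesis using k unfolding D_def by (auto simp: funpow_Suc_right simp del: funpow.simps)
      qed
    next
      assume "par z' \<in> D"
      then obtain k where k: "(par ^^ k) (par z') = z" unfolding D_def by auto
      then have "(par ^^ Suc k) z' = z" by (simp add: funpow_Suc_right del: funpow.simps)
      then show "z' \<in> D" unfolding D_def by blast
    qed
    obtain x y where xy: "{x, y} \<in> wedges xs" "x \<in> D" "y \<notin> D"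
      using cut[OF xs(1), of D] xs zD pzD by auto
    have "{x, y} \<in> T0 - {e}" using xy xs(1) by (auto simp: walk_iff)
    then obtain z' where z': "{x, y} = {z', par z'}" "{z', par z'} \<noteq> e" unfolding T0_def by auto
    then have "(x = z' \<and> y = par z') \<or> (x = par z' \<and> y = z')" by (auto simp: doubleton_eq_iff)
    then show False using claim[OF z'(2)] xy by auto
  qed
  have "spanning_tree V E T0" using T0E conn acyc by (simp add: spanning_tree_def)
  then have "card T \<le> card T0" using assms(3) by (simp add: minimum_spanning_tree_def)
  then show ?thesis using cT0 by simp
qed




lemma handshake:
  assumes "finite V" "finite T" "\<forall>e\<in>T. e \<subseteq> V \<and> card e = 2"
  shows "even (card {v\<in>V. odd (degree T v)})"
proof -
  have "(\<Sum>v\<in>V. degree T v) = (\<Sum>v\<in>V. \<Sum>e\<in>T. of_bool (v \<in> e))"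
  proof (rule sum.cong)
    fix v show "degree T v = (\<Sum>e\<in>T. of_bool (v \<in> e))"
      unfolding degree_def using assms(2) by (simp add: sum.If_cases Int_def)
  qed simp
  also have "\<dots> = (\<Sum>e\<in>T. \<Sum>v\<in>V. of_bool (v \<in> e))" by (rule sum.swap)
  also have "\<dots> = (\<Sum>e\<in>T. card e)"
  proof (rule sum.cong)
    fix e assume "e \<in> T"
    then have "e \<subseteq> V" using assms(3) by auto
    then have "{v\<in>V. v \<in> e} = e" by auto
    then show "(\<Sum>v\<in>V. of_bool (v \<in> e)) = card e"
      using assms(1) by (simp add: sum.If_cases Int_def)
  qed simp
  also have "\<dots> = 2 * card T" using assms(3) by simp
  finally have "even (\<Sum>v\<in>V. degree T v)" by simp
  then show ?thesis using even_sum_iff[OF assms(1), of "degree T"] by simp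
qed

definition cntX :: "'a list \<Rightarrow> nat set \<Rightarrow> 'a \<Rightarrow> nat" where
  "cntX C X v = (\<Sum>i\<in>X. of_bool (C ! i = v) + of_bool (C ! Suc i = v))"

lemma half_cycle:
  assumes "closed_walk V E C" "Od \<subseteq> set C" "even (card Od)"
  shows "\<exists>X \<subseteq> {..<walk_length C}. 2 * card X \<le> walk_length C \<and> (\<forall>v. even (cntX C X v + of_bool (v \<in> Od)))"
proof -
  define L where "L = walk_length C"
  have Cne: "C \<noteq> []" and hl: "hd C = last C" using assms(1) by (auto simp: closed_walk_def walk_def)
  have lenC: "length C = Suc L" using Cne by (simp add: L_def walk_length_def)
  have c0L: "C ! 0 = C ! L" using hl Cne lenC by (simp add: hd_conv_nth last_conv_nth)
  have finO: "finite Od" using assms(2) finite_subset by blast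
  show ?thesis
  proof (cases "L = 0")
    case True
    then have "set C = {C ! 0}" using lenC by (cases C) auto
    then have "Od \<subseteq> {C ! 0}" using assms(2) by simp
    then have "Od = {} \<or> Od = {C ! 0}" by (rule subset_singletonD)
    then have "Od = {}" using assms(3) by auto
    then show ?thesis by (intro exI[of _ "{}"]) (auto simp: cntX_def)
  next
    case False
    define c where "c i = C ! i" for i
    define P where "P = {j. j < L \<and> c j \<in> Od \<and> (\<forall>i<j. c i \<noteq> c j)}"
    define t where "t j = odd (card (P \<inter> {..<j}))" for j
    define cls where "cls i = t (Suc i)" for i
    define F where "F j v = (\<Sum>i<j. if cls i then of_bool (c i = v) + of_bool (c (Suc i) = v) else (0::nat))" for j v
    define G where "G j v = (\<Sum>i<j. of_bool (c i = v) + (of_bool (c (Suc i) = v)::nat))" for j v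
    define H where "H j v = (\<Sum>i<j. if \<not> cls i then of_bool (c i = v) + of_bool (c (Suc i) = v) else (0::nat))" for j v
    have finP: "finite P" unfolding P_def by simp
    have inj: "inj_on c P"
    proof (rule inj_onI)
      fix i j assume ij: "i \<in> P" "j \<in> P" "c i = c j"
      show "i = j"
      proof (rule ccontr)
        assume "i \<noteq> j"
        then have "i < j \<or> j < i" by arith
        then show False using ij unfolding P_def by auto
      qed
    qed
    have imP: "c ` P = Od"
    proof
      show "c ` P \<subseteq> Od" unfolding P_def by auto
      show "Od \<subseteq> c ` P"
      proof
        fix ov assume ov: "ov \<in> Od"
        then have "ov \<in> set C" using assms(2) by auto
        then obtain j where j: "j < length C" "C ! j = ov" by (auto simp: in_set_conv_nth)
        have ex: "\<exists>j. j < L \<and> c j = ov"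
        proof (cases "j < L")
          case True then show ?thesis using j c_def by auto
        next
          case False
          then have "j = L" using j lenC by simp
          then show ?thesis using j c0L False \<open>L \<noteq> 0\<close> c_def by (intro exI[of _ 0]) auto
        qed
        define j0 where "j0 = (LEAST j. j < L \<and> c j = ov)"
        have j0: "j0 < L" "c j0 = ov" using LeastI_ex[OF ex] j0_def by auto
        have "\<forall>i<j0. c i \<noteq> c j0"
        proof (intro allI impI)
          fix i assume "i < j0"
          then have "\<not> (i < L \<and> c i = ov)" using not_less_Least j0_def by blast
          then show "c i \<noteq> c j0" using j0 \<open>i < j0\<close> by auto
        qed
        then have "j0 \<in> P" using j0 ov unfolding P_def by auto
        then show "ov \<in> c ` P" using j0 by auto
      qed
    qed
    have cardP: "card P = card Od" using card_image[OF inj] imP by simp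
    have PL: "P \<inter> {..<L} = P" unfolding P_def by auto
    have tL: "\<not> t L" using PL cardP assms(3) by (simp add: t_def)
    have step_set: "P \<inter> {..<Suc j} = (if j \<in> P then insert j (P \<inter> {..<j}) else P \<inter> {..<j})" for j
      by (auto simp: less_Suc_eq)
    have tS: "t (Suc j) = (t j \<noteq> (j \<in> P))" for j
      using finP by (simp add: t_def step_set)
    have imS: "(of_bool (v \<in> c ` (P \<inter> {..<Suc j}))::nat) = of_bool (v \<in> c ` (P \<inter> {..<j})) + of_bool (j \<in> P \<and> v = c j)" for v j
    proof (cases "j \<in> P")
      case True
      then have "c j \<notin> c ` (P \<inter> {..<j})" unfolding P_def by auto
      then show ?thesis using True by (auto simp: step_set)
    qed (auto simp: step_set)
    have invF: "even (F j v + of_bool (v \<in> c ` (P \<inter> {..<j})) + of_bool (t j \<and> v = c j))" for j v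
    proof (induction j)
      case 0 then show ?case by (simp add: F_def t_def)
    next
      case (Suc j)
      have FS: "F (Suc j) v = F j v + (if cls j then of_bool (c j = v) + of_bool (c (Suc j) = v) else 0)"
        by (simp add: F_def)
      show ?case using Suc unfolding FS imS cls_def tS
        by (cases "j \<in> P"; cases "t j"; cases "v = c j"; cases "v = c (Suc j)") auto
    qed
    have invG: "even (G j v + of_bool (v = c 0) + of_bool (v = c j))" for j v
    proof (induction j)
      case 0 then show ?case by (simp add: G_def)
    next
      case (Suc j)
      have GS: "G (Suc j) v = G j v + (of_bool (c j = v) + of_bool (c (Suc j) = v))"
        by (simp add: G_def)
      show ?case using Suc unfolding GS
        by (cases "v = c 0"; cases "v = c j"; cases "v = c (Suc j)") auto
    qed
    have FGH: "G j v = F j v + H j v" for j v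
      unfolding F_def G_def H_def sum.distrib[symmetric] by (rule sum.cong) auto
    have evF: "even (F L v + of_bool (v \<in> Od))" for v
      using invF[of L v] tL imP by (simp add: PL)
    have evG: "even (G L v)" for v using invG[of L v] c0L c_def by auto
    have evH: "even (H L v + of_bool (v \<in> Od))" for v
      using evF[of v] evG[of v] FGH[of L v] by (auto simp: even_add)
    define X1 where "X1 = {i\<in>{..<L}. cls i}"
    define X0 where "X0 = {i\<in>{..<L}. \<not> cls i}"
    have cX1: "cntX C X1 v = F L v" for v
      unfolding cntX_def F_def X1_def c_def by (subst sum.inter_filter) auto
    have cX0: "cntX C X0 v = H L v" for v
      unfolding cntX_def H_def X0_def c_def by (subst sum.inter_filter) auto
    have cards: "card X1 + card X0 = L"
    proof -
      have "X1 \<union> X0 = {..<L}" "X1 \<inter> X0 = {}" unfolding X1_def X0_def by auto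
      moreover have "finite X1" "finite X0" unfolding X1_def X0_def by auto
      ultimately show ?thesis using card_Un_disjoint[of X1 X0] by simp
    qed
    show ?thesis
    proof (cases "2 * card X1 \<le> L")
      case True
      then show ?thesis using evF cX1 unfolding L_def[symmetric]
        by (intro exI[of _ X1]) (auto simp: X1_def)
    next
      case False
      then have "2 * card X0 \<le> L" using cards by simp
      then show ?thesis using evH cX0 unfolding L_def[symmetric]
        by (intro exI[of _ X0]) (auto simp: X0_def)
    qed
  qed
qed



lemma arith_final:
  fixes n k L A B g :: real
  assumes "g < 3" "k \<ge> 1" "k \<le> n" "L \<ge> 0" "L \<le> (1+g)*k" "2*A \<le> 2*n + L" "B \<le> L + 2*n - 2*k"
  shows "A \<le> 4*n/(3-g) \<or> B \<le> 4*n/(3-g)"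
proof -
  have p: "3 - g > 0" using assms(1) by simp
  have g1: "1 + g \<ge> 0"
  proof (rule ccontr)
    assume "\<not> ?thesis"
    then have "(1+g)*k < 0" using assms(2) by (simp add: mult_neg_pos)
    then show False using assms(4,5) by simp
  qed
  consider "L*(3-g) \<le> 2*n*(1+g)" | "L*(3-g) > 2*n*(1+g)" "g \<ge> 1" | "L*(3-g) > 2*n*(1+g)" "g < 1" by linarith
  then show ?thesis
  proof cases
    case 1
    have "(3-g)*(2*A) \<le> (3-g)*(2*n+L)" using assms(6) p by (simp add: mult_left_mono)
    also have "\<dots> \<le> 8*n" using 1 by (simp add: algebra_simps)
    finally have "A*(3-g) \<le> 4*n" by simp
    then show ?thesis using p by (simp add: pos_le_divide_eq)
  next
    case 2
    have "L \<le> (1+g)*n" using assms(3,5) g1 by (meson mult_left_mono order_trans)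
    then have "2*A \<le> (3+g)*n" using assms(6) by (simp add: algebra_simps)
    then have "(3-g)*(2*A) \<le> (3-g)*((3+g)*n)" using p by (simp add: mult_left_mono)
    also have "\<dots> = (9 - g*g)*n" by (simp add: algebra_simps)
    also have "\<dots> \<le> 8*n"
    proof -
      have "1*1 \<le> g*g" by (rule mult_mono) (use 2(2) in auto)
      moreover have "n \<ge> 0" using assms(2,3) by simp
      ultimately have "(1 - g*g)*n \<le> 0" by (simp add: mult_nonpos_nonneg)
      then show ?thesis by (simp add: algebra_simps)
    qed
    finally have "A*(3-g) \<le> 4*n" by simp
    then show ?thesis using p by (simp add: pos_le_divide_eq)
  next
    case 3
    have g1': "1 + g > 0"
    proof (rule ccontr)
      assume "\<not> ?thesis" then have "1 + g = 0" using g1 by simp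
      then show False using 3 assms(4,5) by simp
    qed
    have "(1+g)*((3-g)*B - 4*n) \<le> (1+g)*((3-g)*(L + 2*n - 2*k) - 4*n)"
      using assms(7) p g1' by (simp add: mult_left_mono)
    also have "\<dots> = (3-g)*(1+g)*(2*n+L) - 2*(3-g)*((1+g)*k) - 4*n*(1+g)" by (simp add: algebra_simps)
    also have "\<dots> \<le> (3-g)*(1+g)*(2*n+L) - 2*(3-g)*L - 4*n*(1+g)"
      using assms(5) p by (simp add: mult_left_mono)
    also have "\<dots> = (1-g)*(2*n*(1+g) - L*(3-g))" by (simp add: algebra_simps)
    also have "\<dots> \<le> 0" using 3 by (simp add: mult_nonneg_nonpos)
    finally have "(3-g)*B - 4*n \<le> 0" using g1' by (simp add: mult_le_0_iff)
    then have "B*(3-g) \<le> 4*n" by (simp add: algebra_simps)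
    then show ?thesis using p by (simp add: pos_le_divide_eq)
  qed
qed



definition ew :: "'a set \<Rightarrow> 'a list" where
  "ew e = (let p = (SOME p. e = {fst p, snd p} \<and> fst p \<noteq> snd p) in [fst p, snd p])"

lemma ew_props:
  assumes "card e = 2"
  shows "\<exists>a b. ew e = [a, b] \<and> e = {a, b} \<and> a \<noteq> b"
proof -
  obtain x y where "e = {x, y}" "x \<noteq> y" using assms by (auto simp: card_2_iff)
  then have "\<exists>p. e = {fst p, snd p} \<and> fst p \<noteq> snd p" by (intro exI[of _ "(x, y)"]) auto
  from someI_ex[OF this] show ?thesis unfolding ew_def Let_def by blast
qed

lemma sum_mset_image_mset_set: "(\<Sum>x\<in>#image_mset g (mset_set A). f x) = (\<Sum>a\<in>A. f (g a))"
  by (simp add: sum_unfold_sum_mset image_mset.compositionality comp_def)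

theorem theorem9:
  fixes V :: "'a set" and E :: "'a set set" and T :: "'a set set"
    and C :: "'a list" and \<gamma> :: real
  assumes "graph V E"
    and "two_vertex_connected V E"
    and "\<gamma> < 3"
    and "minimum_spanning_tree V E T"
    and "closed_walk V E C"
    and "{v\<in>V. odd (degree T v)} \<subseteq> set C"
    and "real (walk_length C) \<le> (1 + \<gamma>) * real (card (set C))"
  shows "\<exists>W. tsp_tour V E W \<and> real (walk_length W) \<le> 4 * real (card V) / (3 - \<gamma>)"
proof -
  have finV: "finite V" and Esub: "\<forall>e\<in>E. e \<subseteq> V \<and> card e = 2" using assms(1) by (auto simp: graph_def)
  have conn: "connected_graph V E" and n3: "card V \<ge> 3" using assms(2) by (auto simp: two_vertex_connected_def)
  have TE: "T \<subseteq> E" and connT: "connected_graph V T"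
    using assms(4) by (auto simp: minimum_spanning_tree_def spanning_tree_def)
  have finT: "finite T"
  proof -
    have "T \<subseteq> Pow V" using TE Esub by auto
    then show ?thesis using finV by (meson finite_Pow_iff finite_subset)
  qed
  have Tsub: "\<forall>e\<in>T. e \<subseteq> V \<and> card e = 2" using TE Esub by auto
  obtain r where r: "r \<in> V" using n3 by fastforce
  have cardT: "card T \<le> card V - 1" using tree_card[OF assms(1) conn assms(4) r] .
  define Od where "Od = {v\<in>V. odd (degree T v)}"
  have evO: "even (card Od)" unfolding Od_def by (rule handshake[OF finV finT Tsub])
  obtain X where X: "X \<subseteq> {..<walk_length C}" "2 * card X \<le> walk_length C"
    "\<forall>v. even (cntX C X v + of_bool (v \<in> Od))"
    using half_cycle[OF assms(5) _ evO] assms(6) unfolding Od_def by blast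
  define L where "L = walk_length C"
  have Cw: "walk V E C" "C \<noteq> []" using assms(5) by (auto simp: closed_walk_def walk_def)
  have lenC: "length C = Suc L" using Cw by (simp add: L_def walk_length_def)
  have finX: "finite X" using X(1) finite_subset by blast
  define M where "M = image_mset ew (mset_set T) + image_mset (\<lambda>i. [C ! i, C ! Suc i]) (mset_set X)"
  have ewT: "\<exists>a b. ew e = [a, b] \<and> e = {a, b} \<and> a \<noteq> b" if "e \<in> T" for e
    using ew_props Tsub that by blast
  have wM: "\<forall>w\<in>#M. walk V E w"
  proof
    fix w assume "w \<in># M"
    then consider (t) e where "e \<in> T" "w = ew e" | (c) i where "i \<in> X" "w = [C ! i, C ! Suc i]"
      unfolding M_def using finT finX by auto
    then show "walk V E w"
    proof cases
      case t
      then obtain a b where "ew e = [a, b]" "e = {a, b}" using ewT by blast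
      then show ?thesis using t TE Tsub by (auto simp: walk_iff)
    next
      case c
      have i: "i < L" using c X(1) L_def by auto
      have "{C ! i, C ! Suc i} \<in> E" using Cw(1) i lenC by (auto simp: walk_def)
      moreover have "C ! i \<in> V" "C ! Suc i \<in> V" using Cw(1) i lenC by (auto simp: walk_def)
      ultimately show ?thesis using c by (auto simp: walk_iff)
    qed
  qed
  have cntM: "cnt M v = degree T v + cntX C X v" for v
  proof -
    have "cnt M v = (\<Sum>e\<in>T. of_bool (hd (ew e) = v) + of_bool (last (ew e) = v))
        + (\<Sum>i\<in>X. of_bool (C ! i = v) + of_bool (C ! Suc i = v))"
      unfolding cnt_def M_def by (simp add: sum_mset_image_mset_set)
    also have "(\<Sum>e\<in>T. of_bool (hd (ew e) = v) + of_bool (last (ew e) = v)) = (\<Sum>e\<in>T. (of_bool (v \<in> e)::nat))"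
    proof (rule sum.cong)
      fix e assume "e \<in> T"
      then obtain a b where "ew e = [a, b]" "e = {a, b}" "a \<noteq> b" using ewT by blast
      then show "of_bool (hd (ew e) = v) + of_bool (last (ew e) = v) = (of_bool (v \<in> e)::nat)" by auto
    qed simp
    also have "\<dots> = degree T v" unfolding degree_def using finT by (simp add: sum.If_cases Int_def)
    finally show ?thesis by (simp add: cntX_def)
  qed
  have evM: "\<forall>v. even (cnt M v)"
  proof
    fix v
    show "even (cnt M v)"
    proof (cases "v \<in> V")
      case True then show ?thesis using X(3) cntM[of v] unfolding Od_def by (auto simp: even_add)
    next
      case False
      then have "degree T v = 0" using Tsub finT by (auto simp: degree_def)
      then show ?thesis using X(3) cntM[of v] False unfolding Od_def by auto
    qed
  qed
  have Tun: "T \<subseteq> (\<Union>w\<in>set_mset M. wedges w)"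
  proof
    fix e assume e: "e \<in> T"
    then obtain a b where ab: "ew e = [a, b]" "e = {a, b}" using ewT by blast
    have "ew e \<in># M" using e finT by (simp add: M_def)
    then show "e \<in> (\<Union>w\<in>set_mset M. wedges w)" using ab by force
  qed
  have connM: "connected_graph V (\<Union>w\<in>set_mset M. wedges w)"
    using connT Tun walk_mono unfolding connected_graph_def by meson
  have Vcov: "V \<subseteq> (\<Union>w\<in>set_mset M. set w)"
  proof
    fix v assume v: "v \<in> V"
    have "\<not> V \<subseteq> {v}"
    proof
      assume "V \<subseteq> {v}"
      then have "card V \<le> card {v}" by (rule card_mono[rotated]) simp
      then show False using n3 by simp
    qed
    then obtain u where u: "u \<in> V" "u \<noteq> v" by blast
    obtain xs where xs: "walk V T xs" "hd xs = v" "last xs = u" using connT v u unfolding connected_graph_def by blast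
    obtain y ys where xs2: "xs = v # y # ys"
      using xs u(2) by (cases xs rule: wedges.cases) (auto simp: walk_def)
    have e: "{v, y} \<in> T" using xs(1) xs2 by (auto simp: walk_iff)
    then obtain a b where ab: "ew {v, y} = [a, b]" "{v, y} = {a, b}" using ewT by blast
    have "ew {v, y} \<in># M" using e finT by (simp add: M_def)
    moreover have "v \<in> set (ew {v, y})" using ab by auto
    ultimately show "v \<in> (\<Union>w\<in>set_mset M. set w)" by blast
  qed
  have Mne: "M \<noteq> {#}" using Vcov r by auto
  obtain W1 where W1: "closed_walk V E W1" "set W1 = (\<Union>w\<in>set_mset M. set w)"
    "walk_length W1 = (\<Sum>w\<in>#M. walk_length w)"
    using euler[OF wM evM connM Mne] by blast
  have lenW1: "walk_length W1 = card T + card X"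
  proof -
    have "(\<Sum>w\<in>#M. walk_length w) = (\<Sum>e\<in>T. walk_length (ew e)) + (\<Sum>i\<in>X. walk_length [C ! i, C ! Suc i])"
      unfolding M_def by (simp add: sum_mset_image_mset_set)
    also have "(\<Sum>e\<in>T. walk_length (ew e)) = (\<Sum>e\<in>T. 1)"
    proof (rule sum.cong)
      fix e assume "e \<in> T"
      then obtain a b where "ew e = [a, b]" using ewT by blast
      then show "walk_length (ew e) = 1" by (simp add: walk_length_def)
    qed simp
    finally show ?thesis using W1(3) by (simp add: walk_length_def)
  qed
  have tour1: "tsp_tour V E W1" using W1 Vcov by (simp add: tsp_tour_def)
  obtain W2 where W2: "closed_walk V E W2" "V \<subseteq> set W2"
    "walk_length W2 \<le> walk_length C + 2 * card (V - set C)"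
    using extend[OF assms(5) conn finV] by blast
  have tour2: "tsp_tour V E W2" using W2 by (simp add: tsp_tour_def)
  have setC: "set C \<subseteq> V" using Cw by (auto simp: walk_def)
  have kn: "card (set C) \<le> card V" using setC finV by (simp add: card_mono)
  have k1: "card (set C) \<ge> 1" using Cw by (simp add: Suc_leI card_gt_0_iff)
  have cd: "card (V - set C) = card V - card (set C)" using setC finV by (simp add: card_Diff_subset)
  have A: "2 * real (walk_length W1) \<le> 2 * real (card V) + real L"
  proof -
    have "2 * walk_length W1 \<le> 2 * card V + L" using lenW1 cardT X(2) L_def by linarith
    then show ?thesis by linarith
  qed
  have B: "real (walk_length W2) \<le> real L + 2 * real (card V) - 2 * real (card (set C))"
  proof -
    have "walk_length W2 + 2 * card (set C) \<le> L + 2 * card V" using W2(3) cd kn L_def by linarith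
    then show ?thesis by linarith
  qed
  have "real (walk_length W1) \<le> 4 * real (card V) / (3 - \<gamma>) \<or> real (walk_length W2) \<le> 4 * real (card V) / (3 - \<gamma>)"
    by (rule arith_final[OF assms(3) _ _ _ _ A B]) (use k1 kn assms(7) L_def in auto)
  then show ?thesis using tour1 tour2 by blast
qed


end
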